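(* Let $\alpha\in\mathbb{Z}_{>0}$, $\beta\in\mathbb{R}_{>0}$, $\gamma\in\mathbb{R}$, and let $(a_n)_n$ be a sequence with asymptotic expansion \[ a_n \approx n^{\alpha n}\beta^n n^\gamma\,\tilde A(n^{-1}) \] for some nonzero formal power series $\tilde A(z)$. For $j\in\mathbb{Z}_{\geq 0}$ define the formal power series \[ \tilde A_j(z) = e^{-\alpha j}\beta^{-j} z^{\alpha j}(1-jz)^{\gamma-\alpha j}\, e^{\alpha z^{-1}(\log(1-jz)+jz)}\,\tilde A\!\left(\frac{z}{1-jz}\right). \] Then for any fixed $j\in\mathbb{Z}_{\geq 0}$, as $n\to\infty$, \[ a_{n-j} \approx n^{\alpha n}\beta^n n^\gamma\,\tilde A_j(n^{-1}). \]
   Context: For a formal power series $\tilde F(z)$, $f_n \approx b_n\tilde F(n^{-1})$ means that for every fixed $r\geq 0$, $f_n = b_n\big(\sum_{\ell=0}^{r-1}[z^\ell]\tilde F(z)\,n^{-\ell} + O(n^{-r})\big)$ as $n\to\infty$. *)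

theory Defs
  imports "HOL-Analysis.Analysis" "HOL-Computational_Algebra.Formal_Power_Series"
    "HOL-Library.Landau_Symbols"
begin

definition asymp_expansion :: "(nat \<Rightarrow> real) \<Rightarrow> (nat \<Rightarrow> real) \<Rightarrow> real fps \<Rightarrow> bool" where
  "asymp_expansion f b F \<longleftrightarrow>
     (\<forall>r::nat. \<exists>e. e \<in> O(\<lambda>n. (1 / real n) ^ r) \<and>
        (\<forall>\<^sub>F n in at_top. f n = b n * ((\<Sum>l<r. fps_nth F l * (1 / real n) ^ l) + e n)))"

definition growth_scale :: "nat \<Rightarrow> real \<Rightarrow> real \<Rightarrow> nat \<Rightarrow> real" where
  "growth_scale \<alpha> \<beta> \<gamma> n = real n ^ (\<alpha> * n) * \<beta> ^ n * real n powr \<gamma>"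

definition fps_one_minus_pow :: "real \<Rightarrow> real \<Rightarrow> real fps" where
  "fps_one_minus_pow j c = fps_binomial c oo (fps_const (- j) * fps_X)"

definition fps_log_one_minus :: "real \<Rightarrow> real fps" where
  "fps_log_one_minus j = fps_ln 1 oo (fps_const (- j) * fps_X)"

text \<open>exp(alpha z^{-1} (log(1 - jz) + jz)); the argument of exp is a power series with
  zero constant term (division by z = shift by one).\<close>
definition fps_exp_part :: "real \<Rightarrow> real \<Rightarrow> real fps" where
  "fps_exp_part \<alpha> j =
     fps_exp 1 oo (fps_const \<alpha> * fps_shift 1 (fps_log_one_minus j + fps_const j * fps_X))"

definition A_j :: "nat \<Rightarrow> real \<Rightarrow> real \<Rightarrow> real fps \<Rightarrow> nat \<Rightarrow> real fps" where
  "A_j \<alpha> \<beta> \<gamma> A j =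
     fps_const (exp (- real \<alpha> * real j) * \<beta> powi (- int j)) * fps_X ^ (\<alpha> * j)
     * fps_one_minus_pow (real j) (\<gamma> - real \<alpha> * real j)
     * fps_exp_part (real \<alpha>) (real j)
     * (A oo (fps_X * inverse (1 - fps_const (real j) * fps_X)))"

end

theory Submission
  imports Defs
begin


definition bnd :: "nat \<Rightarrow> (nat \<Rightarrow> real) \<Rightarrow> bool" where
  "bnd r f \<longleftrightarrow> (\<exists>c. eventually (\<lambda>n. \<bar>f n\<bar> \<le> c * (1 / real n) ^ r) at_top)"

lemma bnd_iff_O: "bnd r f \<longleftrightarrow> f \<in> O(\<lambda>n. (1 / real n) ^ r)"
proof
  assume "bnd r f"
  then obtain c where "eventually (\<lambda>n. \<bar>f n\<bar> \<le> c * (1 / real n) ^ r) at_top"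
    unfolding bnd_def by blast
  then show "f \<in> O(\<lambda>n. (1 / real n) ^ r)"
    by (intro bigoI[of _ c]) (auto elim!: eventually_mono)
next
  assume "f \<in> O(\<lambda>n. (1 / real n) ^ r)"
  then obtain c where "eventually (\<lambda>n. norm (f n) \<le> c * norm ((1 / real n) ^ r)) at_top"
    by (rule landau_o.bigE)
  then show "bnd r f" unfolding bnd_def
    by (intro exI[of _ c]) (auto elim!: eventually_mono)
qed

lemma bnd_cong: assumes "eventually (\<lambda>n. f n = g n) at_top" "bnd r f" shows "bnd r g"
proof -
  from assms(2) obtain c where c: "eventually (\<lambda>n. \<bar>f n\<bar> \<le> c * (1 / real n) ^ r) at_top"
    unfolding bnd_def by blast
  have "eventually (\<lambda>n. \<bar>g n\<bar> \<le> c * (1 / real n) ^ r) at_top"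
    using c assms(1) by eventually_elim simp
  then show ?thesis unfolding bnd_def by blast
qed

lemma inv_le1: "1 / real n \<le> 1"
  by (cases n) (auto simp: divide_le_eq)

lemma bnd_add: assumes "bnd r f" "bnd r g" shows "bnd r (\<lambda>n. f n + g n)"
proof -
  from assms obtain c d where c: "eventually (\<lambda>n. \<bar>f n\<bar> \<le> c * (1 / real n) ^ r) at_top"
    and d: "eventually (\<lambda>n. \<bar>g n\<bar> \<le> d * (1 / real n) ^ r) at_top" unfolding bnd_def by blast
  have "eventually (\<lambda>n. \<bar>f n + g n\<bar> \<le> (c + d) * (1 / real n) ^ r) at_top"
    using c d by eventually_elim (auto simp: algebra_simps intro: order.trans[OF abs_triangle_ineq])
  then show ?thesis unfolding bnd_def by blast
qed

lemma bnd_minus: assumes "bnd r f" shows "bnd r (\<lambda>n. - f n)"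
  using assms unfolding bnd_def by simp

lemma bnd_diff: assumes "bnd r f" "bnd r g" shows "bnd r (\<lambda>n. f n - g n)"
  using bnd_add[OF assms(1) bnd_minus[OF assms(2)]] by simp

lemma bnd_mult: assumes "bnd r f" "bnd s g" shows "bnd (r + s) (\<lambda>n. f n * g n)"
proof -
  from assms obtain c d where c: "eventually (\<lambda>n. \<bar>f n\<bar> \<le> c * (1 / real n) ^ r) at_top"
    and d: "eventually (\<lambda>n. \<bar>g n\<bar> \<le> d * (1 / real n) ^ s) at_top" unfolding bnd_def by blast
  have "eventually (\<lambda>n. \<bar>f n * g n\<bar> \<le> (c * d) * (1 / real n) ^ (r + s)) at_top"
    using c d
  proof eventually_elim
    case (elim n)
    have "\<bar>f n * g n\<bar> = \<bar>f n\<bar> * \<bar>g n\<bar>" by (simp add: abs_mult)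
    also have "\<dots> \<le> (c * (1 / real n) ^ r) * (d * (1 / real n) ^ s)"
      using elim by (intro mult_mono) (auto intro: order.trans[OF abs_ge_zero])
    also have "\<dots> = (c * d) * (1 / real n) ^ (r + s)" by (simp add: power_add)
    finally show ?case .
  qed
  then show ?thesis unfolding bnd_def by blast
qed

lemma bnd_mono: assumes "bnd r f" "r' \<le> r" shows "bnd r' f"
proof -
  from assms obtain c where c: "eventually (\<lambda>n. \<bar>f n\<bar> \<le> c * (1 / real n) ^ r) at_top"
    unfolding bnd_def by blast
  have "eventually (\<lambda>n. \<bar>f n\<bar> \<le> max c 0 * (1 / real n) ^ r') at_top"
    using c
  proof eventually_elim
    case (elim n)
    have "c * (1 / real n) ^ r \<le> max c 0 * (1 / real n) ^ r"
      by (intro mult_right_mono) auto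
    also have "\<dots> \<le> max c 0 * (1 / real n) ^ r'"
      by (intro mult_left_mono power_decreasing assms(2)) (auto simp: inv_le1)
    finally show ?case using elim by linarith
  qed
  then show ?thesis unfolding bnd_def by blast
qed

lemma bnd_tendsto: assumes "(f \<longlongrightarrow> L) at_top" shows "bnd 0 f"
proof -
  have "eventually (\<lambda>n. dist (f n) L < 1) at_top" using assms by (rule tendstoD) simp
  then have "eventually (\<lambda>n. \<bar>f n\<bar> \<le> (\<bar>L\<bar> + 1) * (1 / real n) ^ 0) at_top"
    by eventually_elim (auto simp: dist_real_def)
  then show ?thesis unfolding bnd_def by blast
qed

lemma bnd_cmult: assumes "bnd r f" shows "bnd r (\<lambda>n. c * f n)"
proof -
  have "bnd 0 (\<lambda>n. c)" by (rule bnd_tendsto[of _ c]) simp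
  from bnd_mult[OF this assms] show ?thesis by simp
qed

lemma bnd_n_times: assumes "bnd (Suc r) f" shows "bnd r (\<lambda>n. real n * f n)"
proof -
  from assms obtain c where c: "eventually (\<lambda>n. \<bar>f n\<bar> \<le> c * (1 / real n) ^ Suc r) at_top"
    unfolding bnd_def by blast
  have "eventually (\<lambda>n. \<bar>real n * f n\<bar> \<le> c * (1 / real n) ^ r) at_top"
    using c eventually_gt_at_top[of "0::nat"]
  proof eventually_elim
    case (elim n)
    have "\<bar>real n * f n\<bar> = real n * \<bar>f n\<bar>" by (simp add: abs_mult)
    also have "\<dots> \<le> real n * (c * (1 / real n) ^ Suc r)"
      using elim by (intro mult_left_mono) auto
    also have "\<dots> = c * (1 / real n) ^ r" using elim by (simp add: field_simps)
    finally show ?case .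
  qed
  then show ?thesis unfolding bnd_def by blast
qed

lemma poly_bnd:
  fixes p :: "real poly"
  assumes "\<forall>l<r. coeff p l = 0"
  shows "bnd r (\<lambda>n. poly p (1 / real n))"
proof -
  define C where "C = (\<Sum>i\<le>degree p. \<bar>coeff p i\<bar>)"
  have "\<bar>poly p (1 / real n)\<bar> \<le> C * (1 / real n) ^ r" for n
  proof -
    define x where "x = 1 / real n"
    have x: "0 \<le> x" "x \<le> 1" by (auto simp: x_def inv_le1)
    have "\<bar>poly p x\<bar> = \<bar>\<Sum>i\<le>degree p. coeff p i * x ^ i\<bar>" by (simp add: poly_altdef)
    also have "\<dots> \<le> (\<Sum>i\<le>degree p. \<bar>coeff p i * x ^ i\<bar>)" by (rule sum_abs)
    also have "\<dots> \<le> (\<Sum>i\<le>degree p. \<bar>coeff p i\<bar> * x ^ r)"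
    proof (intro sum_mono)
      fix i assume "i \<in> {..degree p}"
      show "\<bar>coeff p i * x ^ i\<bar> \<le> \<bar>coeff p i\<bar> * x ^ r"
      proof (cases "i < r")
        case True then show ?thesis using assms by simp
      next
        case False
        then have "x ^ i \<le> x ^ r" using x by (intro power_decreasing) auto
        then show ?thesis using x by (simp add: abs_mult mult_left_mono)
      qed
    qed
    also have "\<dots> = C * x ^ r" by (simp add: C_def sum_distrib_right)
    finally show ?thesis by (simp add: x_def)
  qed
  then show ?thesis unfolding bnd_def by (intro exI[of _ C] always_eventually) auto
qed



definition aer :: "nat \<Rightarrow> (nat \<Rightarrow> real) \<Rightarrow> real fps \<Rightarrow> bool" where
  "aer r g F \<longleftrightarrow> (\<exists>p. (\<forall>l<r. coeff p l = fps_nth F l) \<and> bnd r (\<lambda>n. g n - poly p (1 / real n)))"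

lemma aer_cong: assumes "eventually (\<lambda>n. g n = h n) at_top" "aer r g F" shows "aer r h F"
proof -
  from assms(2) obtain p where p: "\<forall>l<r. coeff p l = fps_nth F l" "bnd r (\<lambda>n. g n - poly p (1 / real n))"
    unfolding aer_def by blast
  have "bnd r (\<lambda>n. h n - poly p (1 / real n))"
    by (rule bnd_cong[OF _ p(2)]) (use assms(1) in \<open>auto elim: eventually_mono\<close>)
  with p(1) show ?thesis unfolding aer_def by blast
qed

lemma aer_fps_cong: assumes "\<forall>l<r. fps_nth F l = fps_nth G l" "aer r g F" shows "aer r g G"
  using assms unfolding aer_def by auto

lemma aer_mono: assumes "aer r g F" "r' \<le> r" shows "aer r' g F"
  using assms unfolding aer_def by (meson bnd_mono order_less_le_trans)

lemma bnd_zero: "bnd r (\<lambda>_. 0)"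
  unfolding bnd_def by (intro exI[of _ 0]) simp

lemma aer_add_bnd: assumes "aer r g F" "bnd r h" shows "aer r (\<lambda>n. g n + h n) F"
proof -
  from assms(1) obtain p where p: "\<forall>l<r. coeff p l = fps_nth F l" "bnd r (\<lambda>n. g n - poly p (1 / real n))"
    unfolding aer_def by blast
  have "bnd r (\<lambda>n. (g n - poly p (1 / real n)) + h n)" by (rule bnd_add[OF p(2) assms(2)])
  then have "bnd r (\<lambda>n. (g n + h n) - poly p (1 / real n))" by (simp add: algebra_simps)
  with p(1) show ?thesis unfolding aer_def by blast
qed

lemma aer_bnd0: assumes "aer r g F" shows "bnd 0 g"
proof -
  from aer_mono[OF assms, of 0] obtain p where p: "bnd 0 (\<lambda>n. g n - poly p (1 / real n))"
    unfolding aer_def by blast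
  have "bnd 0 (\<lambda>n. poly p (1 / real n))" by (rule poly_bnd) simp
  from bnd_add[OF p this] show ?thesis by simp
qed

lemma aer_bnd1: assumes "aer (Suc 0) g F" "fps_nth F 0 = 0" shows "bnd 1 g"
proof -
  from assms obtain p where p: "coeff p 0 = 0" "bnd 1 (\<lambda>n. g n - poly p (1 / real n))"
    unfolding aer_def by auto
  have "bnd 1 (\<lambda>n. poly p (1 / real n))" by (rule poly_bnd) (use p(1) in simp)
  from bnd_add[OF p(2) this] show ?thesis by simp
qed

lemma aer_const: "aer r (\<lambda>_. c) (fps_const c)"
  unfolding aer_def
  by (intro exI[of _ "[:c:]"] conjI) (auto simp: bnd_zero coeff_pCons split: nat.splits)

lemma aer_X: "aer r (\<lambda>n. 1 / real n) fps_X"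
  unfolding aer_def
  by (intro exI[of _ "[:0,1:]"] conjI) (auto simp: bnd_zero coeff_pCons fps_X_nth split: nat.splits)

lemma aer_add: assumes "aer r g F" "aer r h G" shows "aer r (\<lambda>n. g n + h n) (F + G)"
proof -
  from assms obtain p q where p: "\<forall>l<r. coeff p l = fps_nth F l" "bnd r (\<lambda>n. g n - poly p (1 / real n))"
    and q: "\<forall>l<r. coeff q l = fps_nth G l" "bnd r (\<lambda>n. h n - poly q (1 / real n))"
    unfolding aer_def by blast
  have "bnd r (\<lambda>n. (g n + h n) - poly (p + q) (1 / real n))"
    using bnd_add[OF p(2) q(2)] by (simp add: algebra_simps)
  moreover have "\<forall>l<r. coeff (p + q) l = fps_nth (F + G) l" using p(1) q(1) by simp
  ultimately show ?thesis unfolding aer_def by blast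
qed

lemma aer_mult: assumes "aer r g F" "aer r h G" shows "aer r (\<lambda>n. g n * h n) (F * G)"
proof -
  from assms obtain p q where p: "\<forall>l<r. coeff p l = fps_nth F l" "bnd r (\<lambda>n. g n - poly p (1 / real n))"
    and q: "\<forall>l<r. coeff q l = fps_nth G l" "bnd r (\<lambda>n. h n - poly q (1 / real n))"
    unfolding aer_def by blast
  have h0: "bnd 0 h" by (rule aer_bnd0[OF assms(2)])
  have p0: "bnd 0 (\<lambda>n. poly p (1 / real n))" by (rule poly_bnd) simp
  have "bnd (r + 0) (\<lambda>n. (g n - poly p (1 / real n)) * h n)" by (rule bnd_mult[OF p(2) h0])
  moreover have "bnd (0 + r) (\<lambda>n. poly p (1 / real n) * (h n - poly q (1 / real n)))"
    by (rule bnd_mult[OF p0 q(2)])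
  ultimately have "bnd r (\<lambda>n. (g n - poly p (1 / real n)) * h n + poly p (1 / real n) * (h n - poly q (1 / real n)))"
    by (intro bnd_add) simp_all
  then have "bnd r (\<lambda>n. g n * h n - poly (p * q) (1 / real n))"
    by (simp add: algebra_simps)
  moreover have "\<forall>l<r. coeff (p * q) l = fps_nth (F * G) l"
    using p(1) q(1) by (auto simp: coeff_mult fps_mult_nth atLeast0AtMost intro!: sum.cong)
  ultimately show ?thesis unfolding aer_def by blast
qed

lemma aer_power: assumes "aer r g F" shows "aer r (\<lambda>n. g n ^ k) (F ^ k)"
proof (induction k)
  case 0
  show ?case using aer_const[of r 1] by simp
next
  case (Suc k)
  from aer_mult[OF assms Suc] show ?case by simp
qed

lemma aer_sum: assumes "\<And>i. i \<in> I \<Longrightarrow> aer r (g i) (F i)"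
  shows "aer r (\<lambda>n. \<Sum>i\<in>I. g i n) (\<Sum>i\<in>I. F i)"
  using assms
proof (induction I rule: infinite_finite_induct)
  case (infinite A)
  then show ?case using aer_const[of r 0] by simp
next
  case empty
  then show ?case using aer_const[of r 0] by simp
next
  case (insert x F)
  then show ?case by (simp add: aer_add)
qed

lemma aer_cmult: assumes "aer r g F" shows "aer r (\<lambda>n. c * g n) (fps_const c * F)"
  by (rule aer_mult[OF aer_const assms])



lemma aer_shift1:
  assumes "aer (Suc r) g G" "fps_nth G 0 = 0"
  shows "aer r (\<lambda>n. real n * g n) (fps_shift 1 G)"
proof -
  from assms(1) obtain p where p: "\<forall>l<Suc r. coeff p l = fps_nth G l"
    "bnd (Suc r) (\<lambda>n. g n - poly p (1 / real n))" unfolding aer_def by blast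
  obtain a q where pq: "p = pCons a q" by (cases p)
  have a: "a = 0" using p(1) assms(2) pq by (metis coeff_pCons_0 zero_less_Suc)
  have b: "bnd r (\<lambda>n. real n * (g n - poly p (1 / real n)))" by (rule bnd_n_times[OF p(2)])
  have ev: "eventually (\<lambda>n. real n * (g n - poly p (1 / real n)) = real n * g n - poly q (1 / real n)) at_top"
    using eventually_gt_at_top[of "0::nat"]
  proof eventually_elim
    case (elim n)
    have "poly p (1 / real n) = (1 / real n) * poly q (1 / real n)" by (simp add: pq a)
    then show ?case using elim by (simp add: right_diff_distrib)
  qed
  have "bnd r (\<lambda>n. real n * g n - poly q (1 / real n))"
    by (rule bnd_cong[OF ev b])
  moreover have "\<forall>l<r. coeff q l = fps_nth (fps_shift 1 G) l"
    using p(1) by (auto simp: pq)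
  ultimately show ?thesis unfolding aer_def by blast
qed

lemma aer_compose_poly:
  assumes u: "aer r u U" "fps_nth U 0 = 0" and p: "\<forall>l<r. coeff p l = fps_nth F l"
  shows "aer r (\<lambda>n. poly p (u n)) (F oo U)"
proof -
  have "aer r (\<lambda>n. \<Sum>i\<le>degree p. coeff p i * u n ^ i) (\<Sum>i\<le>degree p. fps_const (coeff p i) * U ^ i)"
    by (intro aer_sum aer_cmult aer_power u)
  then have 1: "aer r (\<lambda>n. poly p (u n)) (\<Sum>i\<le>degree p. fps_const (coeff p i) * U ^ i)"
    by (rule aer_cong[rotated]) (simp add: poly_altdef)
  have "fps_nth (\<Sum>i\<le>degree p. fps_const (coeff p i) * U ^ i) l = fps_nth (F oo U) l" if "l < r" for l
  proof -
    have z: "fps_nth (U ^ i) l = 0" if "l < i" for i using startsby_zero_power_prefix[OF u(2)] that by blast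
    have "fps_nth (\<Sum>i\<le>degree p. fps_const (coeff p i) * U ^ i) l = (\<Sum>i\<le>degree p. coeff p i * fps_nth (U ^ i) l)"
      by (simp add: fps_sum_nth)
    also have "\<dots> = (\<Sum>i\<le>degree p + l. coeff p i * fps_nth (U ^ i) l)"
      by (intro sum.mono_neutral_left) (auto simp: coeff_eq_0)
    also have "\<dots> = (\<Sum>i\<le>l. coeff p i * fps_nth (U ^ i) l)"
      by (intro sum.mono_neutral_right) (auto simp: z)
    also have "\<dots> = (\<Sum>i\<le>l. fps_nth F i * fps_nth (U ^ i) l)"
      using p that by (intro sum.cong) auto
    also have "\<dots> = fps_nth (F oo U) l" by (simp add: fps_compose_nth atLeast0AtMost)
    finally show ?thesis .
  qed
  with 1 show ?thesis by (intro aer_fps_cong[OF _ 1]) auto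
qed


lemma bnd_power: assumes "bnd r u" shows "bnd (k * r) (\<lambda>n. u n ^ k)"
proof (induction k)
  case 0
  have "bnd 0 (\<lambda>n. 1)" by (rule bnd_tendsto[of _ 1]) simp
  then show ?case by simp
next
  case (Suc k)
  from bnd_mult[OF assms Suc] show ?case by (simp add: add.commute)
qed

lemma bnd1_tendsto: assumes "bnd 1 u" shows "(u \<longlongrightarrow> 0) at_top"
proof -
  from assms obtain c where c: "eventually (\<lambda>n. \<bar>u n\<bar> \<le> c * (1 / real n) ^ 1) at_top"
    unfolding bnd_def by blast
  have "((\<lambda>n. 1 / real n) \<longlongrightarrow> 0) at_top" by (rule lim_1_over_n)
  then show ?thesis
    by (rule tendsto_0_le[where K = c]) (use c in \<open>auto elim!: eventually_mono simp: mult.commute\<close>)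
qed

lemma eval_fps_split:
  fixes F :: "real fps"
  assumes "norm x < fps_conv_radius F"
  shows "eval_fps F x = poly (\<Sum>l<r. monom (fps_nth F l) l) x + x ^ r * eval_fps (fps_shift r F) x"
proof -
  have s: "summable (\<lambda>n. fps_nth F n * x ^ n)" by (rule summable_fps[OF assms])
  have s2: "summable (\<lambda>n. fps_nth (fps_shift r F) n * x ^ n)" by (rule summable_fps) (use assms in simp)
  have "eval_fps F x = (\<Sum>n. fps_nth F (n + r) * x ^ (n + r)) + (\<Sum>i<r. fps_nth F i * x ^ i)"
    unfolding eval_fps_def by (rule suminf_split_initial_segment[OF s])
  also have "(\<Sum>n. fps_nth F (n + r) * x ^ (n + r)) = x ^ r * (\<Sum>n. fps_nth (fps_shift r F) n * x ^ n)"
    using suminf_mult[OF s2, of "x ^ r"] by (simp add: power_add algebra_simps)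
  finally show ?thesis by (simp add: eval_fps_def poly_sum poly_monom)
qed

lemma ereal_pos_below: assumes "(R::ereal) > 0" obtains e where "e > 0" "ereal e < R"
proof (cases R)
  case (real x) then show ?thesis using assms that[of "x/2"] by auto
next
  case PInf then show ?thesis using that[of 1] by auto
next
  case MInf then show ?thesis using assms by auto
qed

lemma aer_compose_eval:
  fixes F :: "real fps"
  assumes R: "fps_conv_radius F > 0" and u: "\<And>r. aer r u U" and U0: "fps_nth U 0 = 0"
  shows "aer r (\<lambda>n. eval_fps F (u n)) (F oo U)"
proof -
  have b1: "bnd 1 u" by (rule aer_bnd1[OF u U0])
  have lim: "(u \<longlongrightarrow> 0) at_top" by (rule bnd1_tendsto[OF b1])
  obtain e where e: "e > 0" "ereal e < fps_conv_radius F" using ereal_pos_below[OF R] by blast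
  have ev: "eventually (\<lambda>n. \<bar>u n\<bar> < e) at_top"
    using tendstoD[OF lim e(1)] by (rule eventually_mono) (simp add: dist_real_def)
  define P where "P = (\<Sum>l<r. monom (fps_nth F l) l)"
  define G where "G = fps_shift r F"
  have eq: "eventually (\<lambda>n. eval_fps F (u n) = poly P (u n) + u n ^ r * eval_fps G (u n)) at_top"
    using ev
  proof (rule eventually_mono)
    fix n assume "\<bar>u n\<bar> < e"
    then have "ereal (norm (u n)) < ereal e" by simp
    then have "ereal (norm (u n)) < fps_conv_radius F" using e(2) by (rule less_trans)
    then show "eval_fps F (u n) = poly P (u n) + u n ^ r * eval_fps G (u n)"
      unfolding P_def G_def by (rule eval_fps_split)
  qed
  have cP: "\<forall>l<r. coeff P l = fps_nth F l"
    unfolding P_def by (simp add: coeff_sum coeff_monom)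
  have 1: "aer r (\<lambda>n. poly P (u n)) (F oo U)" by (rule aer_compose_poly[OF u U0 cP])
  have R0: "ereal (norm (0::real)) < fps_conv_radius G"
    using R unfolding G_def by (simp add: zero_ereal_def)
  have "isCont (eval_fps G) 0" by (rule continuous_eval_fps[OF R0])
  then have "((\<lambda>n. eval_fps G (u n)) \<longlongrightarrow> eval_fps G 0) at_top"
    using lim by (rule isCont_tendsto_compose)
  then have "bnd 0 (\<lambda>n. eval_fps G (u n))" by (rule bnd_tendsto)
  from bnd_mult[OF bnd_power[OF b1, of r] this]
  have 2: "bnd r (\<lambda>n. u n ^ r * eval_fps G (u n))" by simp
  have 3: "aer r (\<lambda>n. poly P (u n) + u n ^ r * eval_fps G (u n)) (F oo U)"
    by (rule aer_add_bnd[OF 1 2])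
  show ?thesis
    by (rule aer_cong[OF _ 3]) (use eq in \<open>simp add: eq_commute\<close>)
qed



lemma aer_lin: "aer r (\<lambda>n. c * (1 / real n)) (fps_const c * fps_X)"
  by (rule aer_cmult[OF aer_X])

lemma lin0: "fps_nth (fps_const (c::real) * fps_X) 0 = 0" by simp

lemma eval_ln: assumes "\<bar>x::real\<bar> < 1" shows "eval_fps (fps_ln 1) x = ln (1 + x)"
proof -
  have "(\<lambda>n. - ((-x)^n) / of_nat n) = (\<lambda>n. fps_nth (fps_ln 1) n * x ^ n)"
  proof
    fix n show "- ((-x)^n) / real n = fps_nth (fps_ln 1) n * x ^ n"
    proof (cases n)
      case (Suc k) then show ?thesis by (simp add: fps_ln_nth power_minus' field_simps)
    qed simp
  qed
  with ln_series'[OF assms] have "(\<lambda>n. fps_nth (fps_ln 1) n * x ^ n) sums ln (1 + x)" by simp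
  then show ?thesis unfolding eval_fps_def by (rule sums_unique[symmetric])
qed

lemma eval_binom: assumes "\<bar>x::real\<bar> < 1" shows "eval_fps (fps_binomial c) x = (1 + x) powr c"
proof -
  from gen_binomial_real[OF assms] have "(\<lambda>n. fps_nth (fps_binomial c) n * x ^ n) sums (1 + x) powr c"
    by simp
  then show ?thesis unfolding eval_fps_def by (rule sums_unique[symmetric])
qed

lemma ev_small: "eventually (\<lambda>n. \<bar>c * (1 / real n)\<bar> < 1) at_top"
proof -
  have "((\<lambda>n. c * (1 / real n)) \<longlongrightarrow> c * 0) at_top" by (intro tendsto_mult tendsto_const lim_1_over_n)
  from tendstoD[OF this, of 1] show ?thesis by (auto elim!: eventually_mono simp: dist_real_def)
qed

lemma aer_log: "aer r (\<lambda>n. ln (1 + (- j) * (1 / real n))) (fps_log_one_minus j)"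
proof -
  have "aer r (\<lambda>n. eval_fps (fps_ln 1) ((- j) * (1 / real n))) (fps_ln 1 oo (fps_const (- j) * fps_X))"
    by (rule aer_compose_eval[OF _ aer_lin lin0]) (simp add: fps_conv_radius_ln)
  then show ?thesis unfolding fps_log_one_minus_def
    by (rule aer_cong[rotated]) (use ev_small[of "- j"] in \<open>auto elim!: eventually_mono simp: eval_ln\<close>)
qed

lemma aer_binom: "aer r (\<lambda>n. (1 + (- j) * (1 / real n)) powr c) (fps_one_minus_pow j c)"
proof -
  have "aer r (\<lambda>n. eval_fps (fps_binomial c) ((- j) * (1 / real n))) (fps_binomial c oo (fps_const (- j) * fps_X))"
    by (rule aer_compose_eval[OF _ aer_lin lin0]) (simp add: fps_conv_radius_binomial)
  then show ?thesis unfolding fps_one_minus_pow_def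
    by (rule aer_cong[rotated]) (use ev_small[of "- j"] in \<open>auto elim!: eventually_mono simp: eval_binom\<close>)
qed

lemma log_nth1: "fps_nth (fps_log_one_minus j) (Suc 0) = - j"
  unfolding fps_log_one_minus_def fps_compose_linear by (simp add: fps_ln_nth)

lemma aer_exp_part:
  "aer r (\<lambda>n. exp (1 * (a * (real n * (ln (1 + (- j) * (1 / real n)) + j * (1 / real n))))))
     (fps_exp_part a j)"
proof -
  define G where "G = fps_log_one_minus j + fps_const j * fps_X"
  have G0: "fps_nth G 0 = 0" by (simp add: G_def fps_log_one_minus_def)
  have aG: "aer r' (\<lambda>n. ln (1 + (- j) * (1 / real n)) + j * (1 / real n)) G" for r'
    unfolding G_def by (intro aer_add aer_log aer_lin)
  have aU: "aer r' (\<lambda>n. a * (real n * (ln (1 + (- j) * (1 / real n)) + j * (1 / real n))))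
      (fps_const a * fps_shift 1 G)" for r'
    by (intro aer_cmult aer_shift1 aG G0)
  have U0: "fps_nth (fps_const a * fps_shift 1 G) 0 = 0"
    by (simp add: G_def log_nth1)
  have "aer r (\<lambda>n. eval_fps (fps_exp 1) (a * (real n * (ln (1 + (- j) * (1 / real n)) + j * (1 / real n)))))
      (fps_exp 1 oo (fps_const a * fps_shift 1 G))"
    by (rule aer_compose_eval[OF _ aU U0]) simp
  then show ?thesis unfolding fps_exp_part_def G_def eval_fps_exp .
qed



lemma inv_geom: "inverse (1 - fps_const (c::real) * fps_X) = Abs_fps (\<lambda>k. c ^ k)"
proof (rule fps_inverse_unique)
  show "(1 - fps_const c * fps_X) * Abs_fps (\<lambda>k. c ^ k) = 1"
  proof (rule fps_ext)
    fix n :: nat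
    show "fps_nth ((1 - fps_const c * fps_X) * Abs_fps (\<lambda>k. c ^ k)) n = fps_nth 1 n"
      by (cases n) (simp_all add: ring_distribs mult.assoc fps_X_mult_nth)
  qed
qed

lemma aer_geom: "aer r (\<lambda>n. 1 / (1 - c * (1 / real n))) (inverse (1 - fps_const c * fps_X))"
proof -
  define P where "P = (\<Sum>k<r. monom (c ^ k) k)"
  have cP: "\<forall>l<r. coeff P l = fps_nth (inverse (1 - fps_const c * fps_X)) l"
    by (simp add: P_def inv_geom coeff_sum coeff_monom)
  have ev: "eventually (\<lambda>n. \<bar>c * (1 / real n)\<bar> < 1 / 2) at_top"
  proof -
    have "((\<lambda>n. c * (1 / real n)) \<longlongrightarrow> c * 0) at_top" by (intro tendsto_mult tendsto_const lim_1_over_n)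
    from tendstoD[OF this, of "1/2"] show ?thesis by (auto elim!: eventually_mono simp: dist_real_def)
  qed
  have "eventually (\<lambda>n. \<bar>1 / (1 - c * (1 / real n)) - poly P (1 / real n)\<bar> \<le> (2 * \<bar>c\<bar> ^ r) * (1 / real n) ^ r) at_top"
    using ev
  proof (rule eventually_mono)
    fix n assume q: "\<bar>c * (1 / real n)\<bar> < 1 / 2"
    define q where "q = c * (1 / real n)"
    have q1: "\<bar>q\<bar> < 1/2" using q by (simp add: q_def)
    have pos: "1 - q > 1/2" using q1 by linarith
    have "poly P (1 / real n) = (\<Sum>k<r. c ^ k * (1 / real n) ^ k)"
      by (simp add: P_def poly_sum poly_monom)
    also have "\<dots> = (\<Sum>k<r. q ^ k)" by (simp only: q_def power_mult_distrib)
    also have "\<dots> = (1 - q ^ r) / (1 - q)" using q1 by (subst sum_gp_strict) auto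
    finally have "1 / (1 - q) - poly P (1 / real n) = q ^ r / (1 - q)"
      using pos by (simp add: field_simps)
    then have "\<bar>1 / (1 - q) - poly P (1 / real n)\<bar> = \<bar>q\<bar> ^ r / (1 - q)"
      using pos by (simp add: abs_divide power_abs)
    also have "\<dots> \<le> \<bar>q\<bar> ^ r / (1/2)"
      using pos by (intro divide_left_mono) auto
    also have "\<bar>q\<bar> ^ r = \<bar>c\<bar> ^ r * (1 / real n) ^ r"
      by (simp only: q_def abs_mult power_mult_distrib) simp
    finally show "\<bar>1 / (1 - c * (1 / real n)) - poly P (1 / real n)\<bar> \<le> (2 * \<bar>c\<bar> ^ r) * (1 / real n) ^ r"
      by (simp add: q_def)
  qed
  then have "bnd r (\<lambda>n. 1 / (1 - c * (1 / real n)) - poly P (1 / real n))"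
    unfolding bnd_def by blast
  with cP show ?thesis unfolding aer_def by blast
qed

lemma bnd_shift: assumes "bnd r e" shows "bnd r (\<lambda>n. e (n - j))"
proof -
  from assms obtain c where "eventually (\<lambda>m. \<bar>e m\<bar> \<le> c * (1 / real m) ^ r) at_top"
    unfolding bnd_def by blast
  then obtain M where M: "\<And>m. m \<ge> M \<Longrightarrow> \<bar>e m\<bar> \<le> c * (1 / real m) ^ r"
    by (auto simp: eventually_at_top_linorder)
  have "eventually (\<lambda>n. \<bar>e (n - j)\<bar> \<le> (max c 0 * 2 ^ r) * (1 / real n) ^ r) at_top"
    using eventually_ge_at_top[of "M + 2 * j + 1"]
  proof (rule eventually_mono)
    fix n assume n: "M + 2 * j + 1 \<le> n"
    have m: "real (n - j) > 0" "real n \<le> 2 * real (n - j)" using n by auto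
    have "M \<le> n - j" using n by simp
    then have "\<bar>e (n - j)\<bar> \<le> c * (1 / real (n - j)) ^ r" by (rule M)
    also have "\<dots> \<le> max c 0 * (1 / real (n - j)) ^ r" by (intro mult_right_mono) auto
    also have "1 / real (n - j) \<le> 2 * (1 / real n)" using m n by (simp add: field_simps)
    then have "(1 / real (n - j)) ^ r \<le> (2 * (1 / real n)) ^ r" by (intro power_mono) auto
    then have "max c 0 * (1 / real (n - j)) ^ r \<le> max c 0 * (2 * (1 / real n)) ^ r"
      by (intro mult_left_mono) auto
    finally have "\<bar>e (n - j)\<bar> \<le> max c 0 * (2 * (1 / real n)) ^ r" .
    also have "\<dots> = (max c 0 * 2 ^ r) * (1 / real n) ^ r" by (simp only: power_mult_distrib mult.assoc)
    finally show "\<bar>e (n - j)\<bar> \<le> (max c 0 * 2 ^ r) * (1 / real n) ^ r" .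
  qed
  then show ?thesis unfolding bnd_def by blast
qed

lemma asymp_to_aer:
  assumes "asymp_expansion f b F" "eventually (\<lambda>n. b n \<noteq> 0) at_top"
  shows "aer r (\<lambda>n. f n / b n) F"
proof -
  from assms(1) obtain e where e: "e \<in> O(\<lambda>n. (1 / real n) ^ r)"
    "eventually (\<lambda>n. f n = b n * ((\<Sum>l<r. fps_nth F l * (1 / real n) ^ l) + e n)) at_top"
    unfolding asymp_expansion_def by blast
  define P where "P = (\<Sum>l<r. monom (fps_nth F l) l)"
  have cP: "\<forall>l<r. coeff P l = fps_nth F l" by (simp add: P_def coeff_sum coeff_monom)
  have pP: "poly P x = (\<Sum>l<r. fps_nth F l * x ^ l)" for x by (simp add: P_def poly_sum poly_monom)
  have be: "bnd r e" using e(1) by (simp add: bnd_iff_O)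
  have ev: "eventually (\<lambda>n. e n = f n / b n - poly P (1 / real n)) at_top"
    using e(2) assms(2) by eventually_elim (simp add: pP)
  have "bnd r (\<lambda>n. f n / b n - poly P (1 / real n))" by (rule bnd_cong[OF ev be])
  with cP show ?thesis unfolding aer_def by blast
qed

lemma aer_to_asymp:
  assumes "\<And>r. aer r (\<lambda>n. f n / b n) F" "eventually (\<lambda>n. b n \<noteq> 0) at_top"
  shows "asymp_expansion f b F"
  unfolding asymp_expansion_def
proof
  fix r
  from assms(1)[of r] obtain p where p: "\<forall>l<r. coeff p l = fps_nth F l"
    "bnd r (\<lambda>n. f n / b n - poly p (1 / real n))" unfolding aer_def by blast
  define P where "P = (\<Sum>l<r. monom (fps_nth F l) l)"
  have pP: "poly P x = (\<Sum>l<r. fps_nth F l * x ^ l)" for x by (simp add: P_def poly_sum poly_monom)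
  have "bnd r (\<lambda>n. poly (p - P) (1 / real n))"
    by (rule poly_bnd) (use p(1) in \<open>simp add: P_def coeff_sum coeff_monom\<close>)
  from bnd_add[OF p(2) this]
  have "bnd r (\<lambda>n. f n / b n - (\<Sum>l<r. fps_nth F l * (1 / real n) ^ l))"
    by (simp add: pP)
  then have "(\<lambda>n. f n / b n - (\<Sum>l<r. fps_nth F l * (1 / real n) ^ l)) \<in> O(\<lambda>n. (1 / real n) ^ r)"
    by (simp add: bnd_iff_O)
  moreover have "eventually (\<lambda>n. f n = b n * ((\<Sum>l<r. fps_nth F l * (1 / real n) ^ l) +
      (f n / b n - (\<Sum>l<r. fps_nth F l * (1 / real n) ^ l)))) at_top"
    using assms(2) by eventually_elim simp
  ultimately show "\<exists>e. e \<in> O(\<lambda>n. (1 / real n) ^ r) \<and>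
      (\<forall>\<^sub>F n in at_top. f n = b n * ((\<Sum>l<r. fps_nth F l * (1 / real n) ^ l) + e n))" by blast
qed



lemma scale_pos: assumes "\<beta> > 0" "k > 0" shows "growth_scale \<alpha> \<beta> \<gamma> k > 0"
  using assms by (simp add: growth_scale_def)

lemma ln_scale: assumes "\<beta> > 0" "k > 0"
  shows "ln (growth_scale \<alpha> \<beta> \<gamma> k) = real \<alpha> * real k * ln (real k) + real k * ln \<beta> + \<gamma> * ln (real k)"
  using assms by (simp add: growth_scale_def ln_mult ln_realpow ln_powr)

lemma scale_ratio:
  assumes b: "\<beta> > 0" and jn: "j < n"
  shows "growth_scale \<alpha> \<beta> \<gamma> (n - j) / growth_scale \<alpha> \<beta> \<gamma> n =
    exp (- real \<alpha> * real j) * \<beta> powi (- int j) * (1 / real n) ^ (\<alpha> * j)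
    * (1 + (- real j) * (1 / real n)) powr (\<gamma> - real \<alpha> * real j)
    * exp (1 * (real \<alpha> * (real n * (ln (1 + (- real j) * (1 / real n)) + real j * (1 / real n)))))"
    (is "?L = ?R")
proof -
  define t where "t = 1 + (- real j) * (1 / real n)"
  have n: "real n > 0" using jn by simp
  have mn: "real (n - j) = real n - real j" using jn by simp
  have m: "real (n - j) > 0" using jn by simp
  have tm: "t = real (n - j) / real n" using n by (simp add: t_def mn field_simps)
  have t: "t > 0" using tm m n by simp
  have lnm: "ln (real (n - j)) = ln (real n) + ln t" using n m by (simp add: tm ln_div)
  have Lpos: "?L > 0" using b jn by (intro divide_pos_pos scale_pos) auto
  have Rpos: "?R > 0" using b t n unfolding t_def[symmetric] by (intro mult_pos_pos) auto
  have "ln ?L = ln (growth_scale \<alpha> \<beta> \<gamma> (n - j)) - ln (growth_scale \<alpha> \<beta> \<gamma> n)"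
    using b jn by (intro ln_divide_pos scale_pos) auto
  also have "\<dots> = real \<alpha> * (real n - real j) * (ln (real n) + ln t) + (real n - real j) * ln \<beta>
      + \<gamma> * (ln (real n) + ln t) - (real \<alpha> * real n * ln (real n) + real n * ln \<beta> + \<gamma> * ln (real n))"
    using b jn lnm[unfolded mn] by (simp add: ln_scale mn)
  finally have L: "ln ?L = real \<alpha> * (real n - real j) * (ln (real n) + ln t) + (real n - real j) * ln \<beta>
      + \<gamma> * (ln (real n) + ln t) - (real \<alpha> * real n * ln (real n) + real n * ln \<beta> + \<gamma> * ln (real n))" .
  have "ln ?R = - real \<alpha> * real j + (- (real j * ln \<beta>)) + real (\<alpha> * j) * (- ln (real n))
      + (\<gamma> - real \<alpha> * real j) * ln t + real \<alpha> * (real n * (ln t + real j * (1 / real n)))"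
    using b t n unfolding t_def[symmetric]
    by (simp add: ln_mult ln_realpow ln_powr power_int_minus ln_inverse ln_div)
  also have "\<dots> = - real \<alpha> * real j - real j * ln \<beta> - real \<alpha> * real j * ln (real n)
      + (\<gamma> - real \<alpha> * real j) * ln t + real \<alpha> * real n * ln t + real \<alpha> * real j"
    using n by (simp add: algebra_simps)
  finally have R: "ln ?R = - real \<alpha> * real j - real j * ln \<beta> - real \<alpha> * real j * ln (real n)
      + (\<gamma> - real \<alpha> * real j) * ln t + real \<alpha> * real n * ln t + real \<alpha> * real j" .
  have "ln ?L = ln ?R" unfolding L R by (simp add: algebra_simps)
  then show ?thesis using Lpos Rpos by simp
qed



theorem lemma11:
  fixes \<alpha> :: nat and \<beta> \<gamma> :: real and a :: "nat \<Rightarrow> real" and A :: "real fps" and j :: nat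
  assumes "\<alpha> > 0" and "\<beta> > 0" and "A \<noteq> 0"
    and "asymp_expansion a (growth_scale \<alpha> \<beta> \<gamma>) A"
  shows "asymp_expansion (\<lambda>n. a (n - j)) (growth_scale \<alpha> \<beta> \<gamma>) (A_j \<alpha> \<beta> \<gamma> A j)"
proof -
  define s where "s = growth_scale \<alpha> \<beta> \<gamma>"
  have spos: "s k > 0" if "k > 0" for k using scale_pos[OF assms(2) that] by (simp add: s_def)
  have evs: "eventually (\<lambda>n. s n \<noteq> 0) at_top"
    using eventually_gt_at_top[of "0::nat"] by (rule eventually_mono) (metis spos less_irrefl)
  have hA: "aer r (\<lambda>m. a m / s m) A" for r
    by (rule asymp_to_aer) (use assms(4) evs in \<open>simp_all add: s_def\<close>)
  define Y where "Y = fps_X * inverse (1 - fps_const (real j) * fps_X)"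
  have aY: "aer r (\<lambda>n. 1 / real n * (1 / (1 - real j * (1 / real n)))) Y" for r
    unfolding Y_def by (intro aer_mult aer_X aer_geom)
  have Y0: "fps_nth Y 0 = 0" by (simp add: Y_def)
  have step6: "aer r (\<lambda>n. a (n - j) / s (n - j)) (A oo Y)" for r
  proof -
    from hA[of r] obtain p where p: "\<forall>l<r. coeff p l = fps_nth A l"
      "bnd r (\<lambda>m. a m / s m - poly p (1 / real m))" unfolding aer_def by blast
    have 1: "aer r (\<lambda>n. poly p (1 / real n * (1 / (1 - real j * (1 / real n))))) (A oo Y)"
      by (rule aer_compose_poly[OF aY Y0 p(1)])
    have 2: "bnd r (\<lambda>n. a (n - j) / s (n - j) - poly p (1 / real (n - j)))"
      using bnd_shift[OF p(2), of j] by simp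
    have ev: "eventually (\<lambda>n. poly p (1 / real n * (1 / (1 - real j * (1 / real n)))) +
        (a (n - j) / s (n - j) - poly p (1 / real (n - j))) = a (n - j) / s (n - j)) at_top"
      using eventually_gt_at_top[of j]
    proof (rule eventually_mono)
      fix n assume n: "j < n"
      then have "1 / real n * (1 / (1 - real j * (1 / real n))) = 1 / real (n - j)"
        by (simp add: of_nat_diff field_simps)
      then show "poly p (1 / real n * (1 / (1 - real j * (1 / real n)))) +
        (a (n - j) / s (n - j) - poly p (1 / real (n - j))) = a (n - j) / s (n - j)" by simp
    qed
    show ?thesis by (rule aer_cong[OF ev aer_add_bnd[OF 1 2]])
  qed
  define C where "C = exp (- real \<alpha> * real j) * \<beta> powi (- int j)"
  have main: "aer r (\<lambda>n. C * (1 / real n) ^ (\<alpha> * j)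
      * (1 + (- real j) * (1 / real n)) powr (\<gamma> - real \<alpha> * real j)
      * exp (1 * (real \<alpha> * (real n * (ln (1 + (- real j) * (1 / real n)) + real j * (1 / real n)))))
      * (a (n - j) / s (n - j))) (A_j \<alpha> \<beta> \<gamma> A j)" for r
  proof -
    have m1: "aer r (\<lambda>n. C * (1 / real n) ^ (\<alpha> * j)) (fps_const C * fps_X ^ (\<alpha> * j))"
      by (rule aer_mult[OF aer_const aer_power[OF aer_X]])
    note m2 = aer_mult[OF m1 aer_binom[of r "real j" "\<gamma> - real \<alpha> * real j"]]
    note m3 = aer_mult[OF m2 aer_exp_part[of r "real \<alpha>" "real j"]]
    note m4 = aer_mult[OF m3 step6[of r]]
    show ?thesis unfolding A_j_def C_def[symmetric] Y_def[symmetric] by (rule m4)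
  qed
  have ev2: "eventually (\<lambda>n. C * (1 / real n) ^ (\<alpha> * j)
      * (1 + (- real j) * (1 / real n)) powr (\<gamma> - real \<alpha> * real j)
      * exp (1 * (real \<alpha> * (real n * (ln (1 + (- real j) * (1 / real n)) + real j * (1 / real n)))))
      * (a (n - j) / s (n - j)) = a (n - j) / s n) at_top"
    using eventually_gt_at_top[of j]
  proof (rule eventually_mono)
    fix n assume n: "j < n"
    have "C * (1 / real n) ^ (\<alpha> * j)
      * (1 + (- real j) * (1 / real n)) powr (\<gamma> - real \<alpha> * real j)
      * exp (1 * (real \<alpha> * (real n * (ln (1 + (- real j) * (1 / real n)) + real j * (1 / real n)))))
      = s (n - j) / s n"
      unfolding C_def s_def by (rule scale_ratio[OF assms(2) n, symmetric])
    moreover have "s (n - j) > 0" "s n > 0" using n by (auto intro: spos)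
    ultimately show "C * (1 / real n) ^ (\<alpha> * j)
      * (1 + (- real j) * (1 / real n)) powr (\<gamma> - real \<alpha> * real j)
      * exp (1 * (real \<alpha> * (real n * (ln (1 + (- real j) * (1 / real n)) + real j * (1 / real n)))))
      * (a (n - j) / s (n - j)) = a (n - j) / s n" by simp
  qed
  have "aer r (\<lambda>n. a (n - j) / s n) (A_j \<alpha> \<beta> \<gamma> A j)" for r
    by (rule aer_cong[OF ev2 main])
  then show ?thesis unfolding s_def[symmetric] by (rule aer_to_asymp[OF _ evs])
qed

end
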